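(* Let $\mathsf V$ be a variety and $\theta$ a congruence of $\mathbf F_{\mathsf V}(z)$. Then $\theta$ is an E-congruence if and only if there are exact congruences $\theta_1,\dots,\theta_m$ of $\mathbf F_{\mathsf V}(z)$ (for some $m\ge1$) such that $\theta=\bigcap_{k=1}^m\theta_k$.
   Context: $\mathbf F_{\mathsf V}(z)$ is the free algebra of the variety $\mathsf V$ on one generator $z$. An algebra is exact in $\mathsf V$ if it is isomorphic to a finitely generated subalgebra of a finitely generated free algebra of $\mathsf V$. A congruence $\theta$ of $\mathbf F_{\mathsf V}(z)$ is exact if $\mathbf F_{\mathsf V}(z)/\theta$ is exact in $\mathsf V$. An algebraic e-generalization problem is a homomorphism $h:\mathbf F_{\mathsf V}(z)\to\prod_{k=1}^m\mathbf E_k$ ($m\ge1$) where each $\mathbf E_k$ is a 1-generated exact algebra in $\mathsf V$ and $p_k\circ h$ is surjective onto $\mathbf E_k$ for each projection $p_k$. A congruence $\theta$ of $\mathbf F_{\mathsf V}(z)$ is an E-congruence if $\theta=\ker(h)$ for some algebraic e-generalization problem $h$, where $\ker(h)=\{(a,a'):h(a)=h(a')\}$. *)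

theory Defs
  imports Main "HOL-Library.FuncSet"
begin

record ('f, 'a) alg =
  acar :: "'a set"
  aop  :: "'f \<Rightarrow> 'a list \<Rightarrow> 'a"

definition algebra :: "('f \<Rightarrow> nat) \<Rightarrow> ('f, 'a) alg \<Rightarrow> bool" where
  "algebra ar A \<longleftrightarrow> (\<forall>f xs. length xs = ar f \<and> set xs \<subseteq> acar A \<longrightarrow> aop A f xs \<in> acar A)"

definition hom :: "('f \<Rightarrow> nat) \<Rightarrow> ('f, 'a) alg \<Rightarrow> ('f, 'b) alg \<Rightarrow> ('a \<Rightarrow> 'b) \<Rightarrow> bool" where
  "hom ar A B h \<longleftrightarrow> (\<forall>x\<in>acar A. h x \<in> acar B) \<and>
     (\<forall>f xs. length xs = ar f \<and> set xs \<subseteq> acar A \<longrightarrow> h (aop A f xs) = aop B f (map h xs))"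

definition isomorphic :: "('f \<Rightarrow> nat) \<Rightarrow> ('f, 'a) alg \<Rightarrow> ('f, 'b) alg \<Rightarrow> bool" where
  "isomorphic ar A B \<longleftrightarrow> (\<exists>h. hom ar A B h \<and> bij_betw h (acar A) (acar B))"

definition congruence :: "('f \<Rightarrow> nat) \<Rightarrow> ('f, 'a) alg \<Rightarrow> ('a \<times> 'a) set \<Rightarrow> bool" where
  "congruence ar A \<theta> \<longleftrightarrow> equiv (acar A) \<theta> \<and>
     (\<forall>f xs ys. length xs = ar f \<and> length ys = ar f \<and> set xs \<subseteq> acar A \<and> set ys \<subseteq> acar A
        \<and> list_all2 (\<lambda>x y. (x, y) \<in> \<theta>) xs ys \<longrightarrow> (aop A f xs, aop A f ys) \<in> \<theta>)"

definition quotient_alg :: "('f, 'a) alg \<Rightarrow> ('a \<times> 'a) set \<Rightarrow> ('f, 'a set) alg" where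
  "quotient_alg A \<theta> = \<lparr>acar = acar A // \<theta>,
      aop = (\<lambda>f Xs. \<theta> `` {aop A f (map (\<lambda>X. SOME x. x \<in> X) Xs)})\<rparr>"

definition sub_alg :: "('f, 'a) alg \<Rightarrow> 'a set \<Rightarrow> ('f, 'a) alg" where
  "sub_alg A S = \<lparr>acar = S, aop = aop A\<rparr>"

definition gen :: "('f \<Rightarrow> nat) \<Rightarrow> ('f, 'a) alg \<Rightarrow> 'a set \<Rightarrow> 'a set" where
  "gen ar A G = \<Inter> {B. G \<subseteq> B \<and> B \<subseteq> acar A \<and>
      (\<forall>f xs. length xs = ar f \<and> set xs \<subseteq> B \<longrightarrow> aop A f xs \<in> B)}"

definition prod_alg :: "'i set \<Rightarrow> ('i \<Rightarrow> ('f, 'a) alg) \<Rightarrow> ('f, 'i \<Rightarrow> 'a) alg" where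
  "prod_alg I A = \<lparr>acar = PiE I (\<lambda>k. acar (A k)),
      aop = (\<lambda>f xs. restrict (\<lambda>k. aop (A k) f (map (\<lambda>x. x k) xs)) I)\<rparr>"

datatype ('f, 'v) trm = Var 'v | Fn 'f "('f, 'v) trm list"

fun wf_trm :: "('f \<Rightarrow> nat) \<Rightarrow> 'v set \<Rightarrow> ('f, 'v) trm \<Rightarrow> bool" where
  "wf_trm ar X (Var x) = (x \<in> X)"
| "wf_trm ar X (Fn f ts) = (length ts = ar f \<and> (\<forall>t\<in>set ts. wf_trm ar X t))"

fun eval :: "('f, 'a) alg \<Rightarrow> ('v \<Rightarrow> 'a) \<Rightarrow> ('f, 'v) trm \<Rightarrow> 'a" where
  "eval A a (Var x) = a x"
| "eval A a (Fn f ts) = aop A f (map (eval A a) ts)"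

definition term_alg :: "('f \<Rightarrow> nat) \<Rightarrow> 'v set \<Rightarrow> ('f, ('f, 'v) trm) alg" where
  "term_alg ar X = \<lparr>acar = {t. wf_trm ar X t}, aop = Fn\<rparr>"

definition models :: "('f, 'a) alg \<Rightarrow> (('f, nat) trm \<times> ('f, nat) trm) set \<Rightarrow> bool" where
  "models A E \<longleftrightarrow> (\<forall>(s, t)\<in>E. \<forall>a. (\<forall>x. a x \<in> acar A) \<longrightarrow> eval A a s = eval A a t)"

text \<open>The variety V is given by the identities E. theta_V(X) is the intersection of all
  congruences phi of T(X) with T(X)/phi in V; F_V(X) = T(X)/theta_V(X).\<close>
definition theta_V :: "('f \<Rightarrow> nat) \<Rightarrow> (('f, nat) trm \<times> ('f, nat) trm) set \<Rightarrow> nat set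
    \<Rightarrow> (('f, nat) trm \<times> ('f, nat) trm) set" where
  "theta_V ar E X = \<Inter> {\<phi>. congruence ar (term_alg ar X) \<phi> \<and>
      models (quotient_alg (term_alg ar X) \<phi>) E}"

definition free_alg :: "('f \<Rightarrow> nat) \<Rightarrow> (('f, nat) trm \<times> ('f, nat) trm) set \<Rightarrow> nat set
    \<Rightarrow> ('f, ('f, nat) trm set) alg" where
  "free_alg ar E X = quotient_alg (term_alg ar X) (theta_V ar E X)"

text \<open>F_V(z): free algebra on the single generator z = variable 0.\<close>
definition free1 :: "('f \<Rightarrow> nat) \<Rightarrow> (('f, nat) trm \<times> ('f, nat) trm) set \<Rightarrow> ('f, ('f, nat) trm set) alg" where
  "free1 ar E = free_alg ar E {0}"

definition exact :: "('f \<Rightarrow> nat) \<Rightarrow> (('f, nat) trm \<times> ('f, nat) trm) set \<Rightarrow> ('f, 'a) alg \<Rightarrow> bool" where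
  "exact ar E A \<longleftrightarrow> (\<exists>n G. finite G \<and> G \<subseteq> acar (free_alg ar E {..<n}) \<and>
      isomorphic ar A (sub_alg (free_alg ar E {..<n}) (gen ar (free_alg ar E {..<n}) G)))"

definition one_generated :: "('f \<Rightarrow> nat) \<Rightarrow> ('f, 'a) alg \<Rightarrow> bool" where
  "one_generated ar A \<longleftrightarrow> (\<exists>a\<in>acar A. gen ar A {a} = acar A)"

definition exact_cong :: "('f \<Rightarrow> nat) \<Rightarrow> (('f, nat) trm \<times> ('f, nat) trm) set
    \<Rightarrow> (('f, nat) trm set \<times> ('f, nat) trm set) set \<Rightarrow> bool" where
  "exact_cong ar E \<theta> \<longleftrightarrow> exact ar E (quotient_alg (free1 ar E) \<theta>)"

definition ker :: "('f, 'a) alg \<Rightarrow> ('a \<Rightarrow> 'b) \<Rightarrow> ('a \<times> 'a) set" where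
  "ker A h = {(a, a'). a \<in> acar A \<and> a' \<in> acar A \<and> h a = h a'}"

text \<open>The E_k are taken with carriers of the type of elements of free algebras
  (every exact algebra is isomorphic to such an algebra).\<close>
definition e_gen_problem :: "('f \<Rightarrow> nat) \<Rightarrow> (('f, nat) trm \<times> ('f, nat) trm) set \<Rightarrow> nat
    \<Rightarrow> (nat \<Rightarrow> ('f, ('f, nat) trm set) alg)
    \<Rightarrow> (('f, nat) trm set \<Rightarrow> nat \<Rightarrow> ('f, nat) trm set) \<Rightarrow> bool" where
  "e_gen_problem ar E m Ek h \<longleftrightarrow> m \<ge> 1 \<and>
     (\<forall>k\<in>{1..m}. algebra ar (Ek k) \<and> exact ar E (Ek k) \<and> one_generated ar (Ek k)) \<and>
     hom ar (free1 ar E) (prod_alg {1..m} Ek) h \<and>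
     (\<forall>k\<in>{1..m}. (\<lambda>a. h a k) ` acar (free1 ar E) = acar (Ek k))"

definition E_congruence :: "('f \<Rightarrow> nat) \<Rightarrow> (('f, nat) trm \<times> ('f, nat) trm) set
    \<Rightarrow> (('f, nat) trm set \<times> ('f, nat) trm set) set \<Rightarrow> bool" where
  "E_congruence ar E \<theta> \<longleftrightarrow> (\<exists>m Ek h. e_gen_problem ar E m Ek h \<and> \<theta> = ker (free1 ar E) h)"

end

theory Submission
  imports Defs
begin

lemma gen_closed:
  assumes "set xs \<subseteq> gen ar A G" "length xs = ar f"
  shows "aop A f xs \<in> gen ar A G"
  using assms unfolding gen_def by blast

lemma gen_sub:
  assumes "algebra ar A" "G \<subseteq> acar A"
  shows "gen ar A G \<subseteq> acar A"
  using assms unfolding gen_def algebra_def by blast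

lemma gen_incl: "G \<subseteq> gen ar A G"
  by (auto simp: gen_def)

lemma gen_hom:
  assumes h: "hom ar A B h" and A: "algebra ar A" and G: "G \<subseteq> acar A"
  shows "h ` gen ar A G \<subseteq> gen ar B (h ` G)"
proof -
  { fix x assume x: "x \<in> gen ar A G"
    have "h x \<in> gen ar B (h ` G)" unfolding gen_def
    proof (rule InterI)
      fix B' assume "B' \<in> {B'. h ` G \<subseteq> B' \<and> B' \<subseteq> acar B \<and>
        (\<forall>f xs. length xs = ar f \<and> set xs \<subseteq> B' \<longrightarrow> aop B f xs \<in> B')}"
      hence B': "h ` G \<subseteq> B'" "\<And>f xs. length xs = ar f \<Longrightarrow> set xs \<subseteq> B' \<Longrightarrow> aop B f xs \<in> B'"
        by auto
      let ?P = "{y \<in> acar A. h y \<in> B'}"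
      have "?P \<in> {B. G \<subseteq> B \<and> B \<subseteq> acar A \<and>
        (\<forall>f xs. length xs = ar f \<and> set xs \<subseteq> B \<longrightarrow> aop A f xs \<in> B)}"
      proof -
        have c1: "G \<subseteq> ?P" using G B'(1) by auto
        have c2: "?P \<subseteq> acar A" by auto
        have c3: "aop A f xs \<in> ?P" if a: "length xs = ar f" "set xs \<subseteq> ?P" for f xs
        proof -
          have "aop A f xs \<in> acar A" using A a unfolding algebra_def by blast
          moreover have "h (aop A f xs) = aop B f (map h xs)" using h a unfolding hom_def by blast
          moreover have "aop B f (map h xs) \<in> B'" using a by (intro B'(2)) auto
          ultimately show "aop A f xs \<in> ?P" by simp
        qed
        show ?thesis using c1 c2 c3 by blast
      qed
      hence "x \<in> ?P" using x unfolding gen_def by blast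
      thus "h x \<in> B'" by simp
    qed }
  thus ?thesis by blast
qed

lemma algebra_sub_gen: "algebra ar (sub_alg A (gen ar A G))"
  unfolding algebra_def sub_alg_def using gen_closed by fastforce

lemma hom_comp:
  assumes "hom ar A B g" "hom ar B C h"
  shows "hom ar A C (h \<circ> g)"
  unfolding hom_def
proof (intro conjI ballI allI impI)
  fix x assume "x \<in> acar A" thus "(h \<circ> g) x \<in> acar C" using assms unfolding hom_def by auto
next
  fix f xs assume a: "length xs = ar f \<and> set xs \<subseteq> acar A"
  have 1: "g (aop A f xs) = aop B f (map g xs)" using assms(1) a unfolding hom_def by blast
  have "set (map g xs) \<subseteq> acar B" using assms(1) a unfolding hom_def by auto
  moreover have "length (map g xs) = ar f" using a by simp
  ultimately have "h (aop B f (map g xs)) = aop C f (map h (map g xs))" using assms(2) unfolding hom_def by blast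
  thus "(h \<circ> g) (aop A f xs) = aop C f (map (h \<circ> g) xs)" using 1 by simp
qed

lemma hom_id: "hom ar A A id"
  unfolding hom_def by auto

lemma cong_equiv: "congruence ar A \<theta> \<Longrightarrow> equiv (acar A) \<theta>"
  unfolding congruence_def by blast

lemma algebra_quot:
  assumes c: "congruence ar A \<theta>" and A: "algebra ar A"
  shows "algebra ar (quotient_alg A \<theta>)"
  unfolding algebra_def quotient_alg_def
proof (simp, intro allI impI)
  fix f and Xs :: "'b set list"
  assume a: "length Xs = ar f \<and> set Xs \<subseteq> acar A // \<theta>"
  have eq: "equiv (acar A) \<theta>" using c by (rule cong_equiv)
  have "\<forall>X\<in>set Xs. (SOME x. x \<in> X) \<in> acar A"
  proof
    fix X assume "X \<in> set Xs"
    hence X: "X \<in> acar A // \<theta>" using a by blast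
    hence "X \<noteq> {}" using eq in_quotient_imp_non_empty by blast
    hence "(SOME x. x \<in> X) \<in> X" by (simp add: some_in_eq)
    thus "(SOME x. x \<in> X) \<in> acar A" using X eq in_quotient_imp_subset by blast
  qed
  hence "aop A f (map (\<lambda>X. SOME x. x \<in> X) Xs) \<in> acar A"
  proof -
    have "set (map (\<lambda>X. SOME x. x \<in> X) Xs) \<subseteq> acar A" using \<open>\<forall>X\<in>set Xs. _\<close> by auto
    moreover have "length (map (\<lambda>X. SOME x. x \<in> X) Xs) = ar f" using a by simp
    ultimately show ?thesis using A unfolding algebra_def by blast
  qed
  thus "\<theta> `` {aop A f (map (\<lambda>X. SOME x. x \<in> X) Xs)} \<in> acar A // \<theta>"
    by (rule quotientI)
qed

lemma proj_hom:
  assumes c: "congruence ar A \<theta>" and A: "algebra ar A"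
  shows "hom ar A (quotient_alg A \<theta>) (\<lambda>a. \<theta> `` {a})"
  unfolding hom_def
proof (intro conjI ballI allI impI)
  have eq: "equiv (acar A) \<theta>" using c by (rule cong_equiv)
  fix x assume "x \<in> acar A" thus "\<theta> `` {x} \<in> acar (quotient_alg A \<theta>)"
    unfolding quotient_alg_def by (simp add: quotientI)
next
  have eq: "equiv (acar A) \<theta>" using c by (rule cong_equiv)
  fix f xs assume a: "length xs = ar f \<and> set xs \<subseteq> acar A"
  let ?ys = "map (\<lambda>X. SOME x. x \<in> X) (map (\<lambda>a. \<theta> `` {a}) xs)"
  have r: "\<forall>x\<in>set xs. (x, SOME y. y \<in> \<theta> `` {x}) \<in> \<theta>"
  proof
    fix x assume "x \<in> set xs"
    hence "x \<in> acar A" using a by blast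
    hence "x \<in> \<theta> `` {x}" by (rule equiv_class_self[OF eq])
    hence "(SOME y. y \<in> \<theta> `` {x}) \<in> \<theta> `` {x}" by (rule someI)
    thus "(x, SOME y. y \<in> \<theta> `` {x}) \<in> \<theta>" by simp
  qed
  have l2: "list_all2 (\<lambda>x y. (x, y) \<in> \<theta>) xs ?ys"
    using r by (simp add: list.rel_map list_all2_same)
  have sub: "\<theta> \<subseteq> acar A \<times> acar A" using eq by (rule equivE)
  have ys: "set ?ys \<subseteq> acar A" using r sub by auto
  have comp: "\<And>f xs ys. length xs = ar f \<Longrightarrow> length ys = ar f \<Longrightarrow> set xs \<subseteq> acar A \<Longrightarrow>
      set ys \<subseteq> acar A \<Longrightarrow> list_all2 (\<lambda>x y. (x, y) \<in> \<theta>) xs ys \<Longrightarrow> (aop A f xs, aop A f ys) \<in> \<theta>"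
    using c unfolding congruence_def by blast
  have "(aop A f xs, aop A f ?ys) \<in> \<theta>"
    by (rule comp) (use a ys l2 in auto)
  hence "\<theta> `` {aop A f xs} = \<theta> `` {aop A f ?ys}" by (rule equiv_class_eq[OF eq])
  thus "\<theta> `` {aop A f xs} = aop (quotient_alg A \<theta>) f (map (\<lambda>a. \<theta> `` {a}) xs)"
    unfolding quotient_alg_def by simp
qed

lemma cong_Inter:
  assumes "S \<noteq> {}" "\<forall>\<theta>\<in>S. congruence ar A \<theta>"
  shows "congruence ar A (\<Inter>S)"
proof -
  have "equiv (acar A) (\<Inter>S)"
  proof (rule equivI)
    show "\<Inter>S \<subseteq> acar A \<times> acar A" using assms unfolding congruence_def equiv_def by blast
    show "refl_on (acar A) (\<Inter>S)" using assms unfolding congruence_def equiv_def refl_on_def by blast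
    show "sym (\<Inter>S)" using assms unfolding congruence_def equiv_def sym_def by blast
    show "trans (\<Inter>S)" using assms unfolding congruence_def equiv_def trans_def by blast
  qed
  moreover have "\<forall>f xs ys. length xs = ar f \<and> length ys = ar f \<and> set xs \<subseteq> acar A \<and> set ys \<subseteq> acar A
        \<and> list_all2 (\<lambda>x y. (x, y) \<in> \<Inter>S) xs ys \<longrightarrow> (aop A f xs, aop A f ys) \<in> \<Inter>S"
  proof (intro allI impI InterI)
    fix f xs ys \<theta> assume a: "length xs = ar f \<and> length ys = ar f \<and> set xs \<subseteq> acar A \<and> set ys \<subseteq> acar A
        \<and> list_all2 (\<lambda>x y. (x, y) \<in> \<Inter>S) xs ys" and t: "\<theta> \<in> S"
    have "list_all2 (\<lambda>x y. (x, y) \<in> \<theta>) xs ys"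
      using a t by (auto elim: list_all2_mono)
    thus "(aop A f xs, aop A f ys) \<in> \<theta>" using a t assms(2) unfolding congruence_def by blast
  qed
  ultimately show ?thesis unfolding congruence_def by blast
qed

lemma ker_cong:
  assumes h: "hom ar A B h" and A: "algebra ar A"
  shows "congruence ar A (ker A h)"
  unfolding congruence_def
proof (intro conjI allI impI)
  show "equiv (acar A) (ker A h)"
    by (rule equivI) (auto simp: ker_def refl_on_def sym_def trans_def)
  fix f xs ys assume a: "length xs = ar f \<and> length ys = ar f \<and> set xs \<subseteq> acar A \<and> set ys \<subseteq> acar A
        \<and> list_all2 (\<lambda>x y. (x, y) \<in> ker A h) xs ys"
  have "map h xs = map h ys" using a
    by (auto simp: ker_def list_all2_conv_all_nth intro: nth_equalityI)
  moreover have "h (aop A f xs) = aop B f (map h xs)" "h (aop A f ys) = aop B f (map h ys)"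
    using h a unfolding hom_def by blast+
  moreover have "aop A f xs \<in> acar A" "aop A f ys \<in> acar A" using A a unfolding algebra_def by blast+
  ultimately show "(aop A f xs, aop A f ys) \<in> ker A h" unfolding ker_def by simp
qed


lemma ker_iso:
  assumes h: "hom ar A B h" and A: "algebra ar A" and s: "h ` acar A = acar B"
  shows "isomorphic ar (quotient_alg A (ker A h)) B"
proof -
  let ?K = "ker A h"
  let ?Q = "quotient_alg A ?K"
  define \<phi> where "\<phi> X = h (SOME x. x \<in> X)" for X
  have eqK: "equiv (acar A) ?K" using ker_cong[OF h A] by (rule cong_equiv)
  have cQ: "acar ?Q = acar A // ?K" by (simp add: quotient_alg_def)
  have phi: "\<phi> (?K `` {a}) = h a" if a: "a \<in> acar A" for a
  proof -
    have "a \<in> ?K `` {a}" using a by (rule equiv_class_self[OF eqK])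
    hence "(SOME x. x \<in> ?K `` {a}) \<in> ?K `` {a}" by (rule someI)
    thus ?thesis unfolding \<phi>_def ker_def by auto
  qed
  have some_in: "(SOME x. x \<in> X) \<in> acar A" if "X \<in> acar A // ?K" for X
  proof -
    from that obtain a where a: "a \<in> acar A" "X = ?K `` {a}" by (auto elim: quotientE)
    have "a \<in> X" unfolding a(2) using a(1) by (rule equiv_class_self[OF eqK])
    hence "(SOME x. x \<in> X) \<in> X" by (rule someI)
    thus ?thesis using a unfolding ker_def by auto
  qed
  have hom: "hom ar ?Q B \<phi>"
    unfolding hom_def
  proof (intro conjI ballI allI impI)
    fix X assume "X \<in> acar ?Q"
    thus "\<phi> X \<in> acar B" using some_in cQ h unfolding \<phi>_def hom_def by auto
  next
    fix f Xs assume a: "length Xs = ar f \<and> set Xs \<subseteq> acar ?Q"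
    let ?ys = "map (\<lambda>X. SOME x. x \<in> X) Xs"
    have ys: "set ?ys \<subseteq> acar A" "length ?ys = ar f" using a some_in cQ by auto
    hence in1: "aop A f ?ys \<in> acar A" using A unfolding algebra_def by blast
    have "\<phi> (aop ?Q f Xs) = \<phi> (?K `` {aop A f ?ys})" by (simp add: quotient_alg_def)
    also have "\<dots> = h (aop A f ?ys)" using phi in1 by blast
    also have "\<dots> = aop B f (map h ?ys)" using h ys unfolding hom_def by blast
    also have "\<dots> = aop B f (map \<phi> Xs)" unfolding \<phi>_def by (simp add: o_def)
    finally show "\<phi> (aop ?Q f Xs) = aop B f (map \<phi> Xs)" .
  qed
  have inj: "inj_on \<phi> (acar ?Q)"
  proof (rule inj_onI)
    fix X Y assume X: "X \<in> acar ?Q" and Y: "Y \<in> acar ?Q" and e: "\<phi> X = \<phi> Y"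
    from X cQ obtain a where a: "a \<in> acar A" "X = ?K `` {a}" by (auto elim: quotientE)
    from Y cQ obtain b where b: "b \<in> acar A" "Y = ?K `` {b}" by (auto elim: quotientE)
    have "h a = h b" using e a b phi by simp
    hence "(a, b) \<in> ?K" using a b unfolding ker_def by simp
    hence "?K `` {a} = ?K `` {b}" by (rule equiv_class_eq[OF eqK])
    thus "X = Y" using a b by simp
  qed
  have sur: "\<phi> ` acar ?Q = acar B"
  proof
    show "\<phi> ` acar ?Q \<subseteq> acar B" using hom unfolding hom_def by auto
    show "acar B \<subseteq> \<phi> ` acar ?Q"
    proof
      fix y assume "y \<in> acar B"
      then obtain a where a: "a \<in> acar A" "y = h a" using s by auto
      hence "?K `` {a} \<in> acar ?Q" using cQ by (simp add: quotientI)
      moreover have "\<phi> (?K `` {a}) = y" using phi a by simp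
      ultimately show "y \<in> \<phi> ` acar ?Q" by blast
    qed
  qed
  show ?thesis unfolding isomorphic_def bij_betw_def using hom inj sur by blast
qed

lemma iso_trans:
  assumes "isomorphic ar A B" "isomorphic ar B C"
  shows "isomorphic ar A C"
  using assms unfolding isomorphic_def by (meson bij_betw_trans hom_comp)

lemma aop_term[simp]: "aop (term_alg ar X) = Fn" "acar (term_alg ar X) = {t. wf_trm ar X t}"
  by (simp_all add: term_alg_def)

lemma algebra_term: "algebra ar (term_alg ar X)"
  unfolding algebra_def term_alg_def by auto

lemma full_quot:
  assumes "C \<noteq> {}" shows "C // (C \<times> C) = {C}"
  using assms unfolding quotient_def by auto

lemma eval_full:
  fixes ar :: "'f \<Rightarrow> nat"
  defines "C \<equiv> acar (term_alg ar {0::nat})"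
  assumes "wf_trm ar UNIV (s :: ('f, nat) trm)" "\<forall>x. a x = C"
  shows "eval (quotient_alg (term_alg ar {0}) (C \<times> C)) a s = C"
  using assms(2)
proof (induction s)
  case (Var x) thus ?case using assms(3) by simp
next
  case (Fn f ts)
  have C0: "Var 0 \<in> C" unfolding C_def term_alg_def by simp
  hence sC: "(SOME x. x \<in> C) \<in> C" by (rule someI)
  have IH: "map (eval (quotient_alg (term_alg ar {0}) (C \<times> C)) a) ts = map (\<lambda>_. C) ts"
    using Fn by auto
  have "Fn f (map (\<lambda>_. SOME x. x \<in> C) ts) \<in> C"
    using Fn.prems sC unfolding C_def term_alg_def by auto
  hence 3: "(C \<times> C) `` {Fn f (map (\<lambda>_. SOME x. x \<in> C) ts)} = C" by auto
  let ?Q = "quotient_alg (term_alg ar {0}) (C \<times> C)"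
  have "eval ?Q a (Fn f ts) = (C \<times> C) `` {Fn f (map (\<lambda>X. SOME x. x \<in> X) (map (eval ?Q a) ts))}"
    by (simp add: quotient_alg_def)
  also have "\<dots> = (C \<times> C) `` {Fn f (map (\<lambda>X. SOME x. x \<in> X) (map (\<lambda>_. C) ts))}"
    by (simp only: IH)
  also have "\<dots> = C" using 3 by (simp add: o_def)
  finally show ?case .
qed


lemma thetaV_cong:
  fixes ar :: "'f \<Rightarrow> nat" and E :: "(('f, nat) trm \<times> ('f, nat) trm) set"
  assumes wfE: "\<forall>(s, t)\<in>E. wf_trm ar UNIV s \<and> wf_trm ar UNIV t"
  shows "congruence ar (term_alg ar {0}) (theta_V ar E {0})"
proof -
  define C where "C = acar (term_alg ar {0::nat})"
  have C0: "Var 0 \<in> C" unfolding C_def by simp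
  have cong: "congruence ar (term_alg ar {0}) (C \<times> C)"
    unfolding congruence_def
  proof (intro conjI allI impI)
    show "equiv (acar (term_alg ar {0})) (C \<times> C)"
      unfolding C_def by (rule equivI) (auto simp: refl_on_def sym_def trans_def)
    fix f xs ys assume a: "length xs = ar f \<and> length ys = ar f \<and> set xs \<subseteq> acar (term_alg ar {0}) \<and>
        set ys \<subseteq> acar (term_alg ar {0}) \<and> list_all2 (\<lambda>x y. (x, y) \<in> C \<times> C) xs ys"
    thus "(aop (term_alg ar {0}) f xs, aop (term_alg ar {0}) f ys) \<in> C \<times> C"
      unfolding C_def by auto
  qed
  have mod0: "eval (quotient_alg (term_alg ar {0}) (C \<times> C)) a s =
            eval (quotient_alg (term_alg ar {0}) (C \<times> C)) a t"
    if p: "(s, t) \<in> E" and a: "\<forall>x. a x \<in> acar (quotient_alg (term_alg ar {0}) (C \<times> C))"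
    for s t and a :: "nat \<Rightarrow> ('f, nat) trm set"
  proof -
    have "acar (quotient_alg (term_alg ar {0}) (C \<times> C)) = C // (C \<times> C)"
      unfolding C_def by (simp add: quotient_alg_def)
    also have "\<dots> = {C}" using full_quot[of C] C0 by blast
    finally have "acar (quotient_alg (term_alg ar {0}) (C \<times> C)) = {C}" .
    hence a': "\<forall>x. a x = C" using a by auto
    have ws: "wf_trm ar UNIV s" and wt: "wf_trm ar UNIV t" using wfE p by auto
    have a'': "\<forall>x. a x = acar (term_alg ar {0::nat})" using a' C_def by simp
    have "eval (quotient_alg (term_alg ar {0}) (acar (term_alg ar {0::nat}) \<times> acar (term_alg ar {0::nat}))) a s =
      eval (quotient_alg (term_alg ar {0}) (acar (term_alg ar {0::nat}) \<times> acar (term_alg ar {0::nat}))) a t"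
      using eval_full[OF ws a''] eval_full[OF wt a''] by (rule trans[OF _ sym])
    thus ?thesis unfolding C_def .
  qed
  have mod: "models (quotient_alg (term_alg ar {0}) (C \<times> C)) E"
    unfolding models_def using mod0 by auto
  show ?thesis unfolding theta_V_def
    by (rule cong_Inter) (use cong mod in auto)
qed

lemma free1_algebra:
  assumes wfE: "\<forall>(s, t)\<in>E. wf_trm ar UNIV s \<and> wf_trm ar UNIV t"
  shows "algebra ar (free1 ar E)"
  unfolding free1_def free_alg_def
  by (rule algebra_quot[OF thetaV_cong[OF wfE] algebra_term])

lemma gen_term:
  assumes "wf_trm ar {0} t"
  shows "t \<in> gen ar (term_alg ar {0::nat}) {Var 0}"
  using assms
proof (induction t)
  case (Var x) thus ?case using gen_incl by fastforce
next
  case (Fn f ts)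
  have "set ts \<subseteq> gen ar (term_alg ar {0::nat}) {Var 0}" using Fn by auto
  hence "aop (term_alg ar {0}) f ts \<in> gen ar (term_alg ar {0::nat}) {Var 0}"
    using Fn.prems by (intro gen_closed) auto
  thus ?case by simp
qed

lemma free1_gen:
  fixes ar :: "'f \<Rightarrow> nat" and E :: "(('f, nat) trm \<times> ('f, nat) trm) set"
  assumes wfE: "\<forall>(s, t)\<in>E. wf_trm ar UNIV s \<and> wf_trm ar UNIV t"
  defines "v \<equiv> theta_V ar E {0} `` {Var 0}"
  shows "v \<in> acar (free1 ar E)" "acar (free1 ar E) \<subseteq> gen ar (free1 ar E) {v}"
proof -
  let ?T = "term_alg ar {0::nat}"
  have ph: "hom ar ?T (free1 ar E) (\<lambda>a. theta_V ar E {0} `` {a})"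
    unfolding free1_def free_alg_def by (rule proj_hom[OF thetaV_cong[OF wfE] algebra_term])
  have V: "{Var 0} \<subseteq> acar ?T" by simp
  have "\<forall>x\<in>acar ?T. theta_V ar E {0} `` {x} \<in> acar (free1 ar E)"
    using ph unfolding hom_def by (rule conjunct1)
  thus "v \<in> acar (free1 ar E)" unfolding v_def using V by blast
  have g: "(\<lambda>a. theta_V ar E {0} `` {a}) ` gen ar ?T {Var 0} \<subseteq>
      gen ar (free1 ar E) ((\<lambda>a. theta_V ar E {0} `` {a}) ` {Var 0})"
    by (rule gen_hom[OF ph algebra_term V])
  have i1: "(\<lambda>a. theta_V ar E {0} `` {a}) ` {Var 0} = {v}" unfolding v_def by (simp only: image_insert image_empty)
  have i2: "acar ?T \<subseteq> gen ar ?T {Var 0}"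
  proof
    fix t assume "t \<in> acar ?T" thus "t \<in> gen ar ?T {Var 0}" by (intro gen_term) simp
  qed
  have i3: "acar (free1 ar E) = acar ?T // theta_V ar E {0}"
    by (simp only: free1_def free_alg_def quotient_alg_def alg.simps)
  have i4: "acar ?T // theta_V ar E {0} = (\<lambda>a. theta_V ar E {0} `` {a}) ` acar ?T"
    unfolding quotient_def by blast
  have "acar (free1 ar E) = (\<lambda>a. theta_V ar E {0} `` {a}) ` acar ?T" using i3 i4 by (rule trans)
  also have "\<dots> \<subseteq> (\<lambda>a. theta_V ar E {0} `` {a}) ` gen ar ?T {Var 0}" using i2 by (rule image_mono)
  also have "\<dots> \<subseteq> gen ar (free1 ar E) {v}" using g unfolding i1 .
  finally show "acar (free1 ar E) \<subseteq> gen ar (free1 ar E) {v}" .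
qed

lemma ker_prod:
  assumes "I \<noteq> {}" "\<forall>a\<in>acar A. h a \<in> extensional I"
  shows "ker A h = (\<Inter>k\<in>I. ker A (\<lambda>a. h a k))"
  using assms unfolding ker_def by (auto intro: extensionalityI)


theorem theorem4p4:
  fixes ar :: "'f \<Rightarrow> nat"
    and E :: "(('f, nat) trm \<times> ('f, nat) trm) set"
    and \<theta> :: "(('f, nat) trm set \<times> ('f, nat) trm set) set"
  assumes "\<forall>(s, t)\<in>E. wf_trm ar UNIV s \<and> wf_trm ar UNIV t"
    and "congruence ar (free1 ar E) \<theta>"
  shows "E_congruence ar E \<theta> \<longleftrightarrow>
    (\<exists>m::nat \<ge> 1. \<exists>\<theta>s. (\<forall>k\<in>{1..m}. congruence ar (free1 ar E) (\<theta>s k) \<and> exact_cong ar E (\<theta>s k))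
       \<and> \<theta> = (\<Inter>k\<in>{1..m}. \<theta>s k))"
proof
  let ?F = "free1 ar E"
  have FA: "algebra ar ?F" using free1_algebra[OF assms(1)] .
  assume "E_congruence ar E \<theta>"
  then obtain m Ek h where egp: "e_gen_problem ar E m Ek h" and th: "\<theta> = ker ?F h"
    unfolding E_congruence_def by blast
  have m1: "m \<ge> 1" and Ekp: "\<forall>k\<in>{1..m}. algebra ar (Ek k) \<and> exact ar E (Ek k)"
    and h: "hom ar ?F (prod_alg {1..m} Ek) h"
    and sur: "\<forall>k\<in>{1..m}. (\<lambda>a. h a k) ` acar ?F = acar (Ek k)"
    using egp unfolding e_gen_problem_def by blast+
  have hP: "\<forall>x\<in>acar ?F. h x \<in> PiE {1..m} (\<lambda>k. acar (Ek k))"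
  proof -
    have "\<forall>x\<in>acar ?F. h x \<in> acar (prod_alg {1..m} Ek)" using h unfolding hom_def by blast
    thus ?thesis by (simp add: prod_alg_def)
  qed
  have hk: "hom ar ?F (Ek k) (\<lambda>a. h a k)" if k: "k \<in> {1..m}" for k
    unfolding hom_def
  proof (intro conjI ballI allI impI)
    fix x assume "x \<in> acar ?F"
    hence "h x \<in> PiE {1..m} (\<lambda>k. acar (Ek k))" using hP by blast
    thus "h x k \<in> acar (Ek k)" using k by (rule PiE_mem)
  next
    fix f xs assume a: "length xs = ar f \<and> set xs \<subseteq> acar ?F"
    hence "h (aop ?F f xs) = aop (prod_alg {1..m} Ek) f (map h xs)" using h unfolding hom_def by blast
    thus "h (aop ?F f xs) k = aop (Ek k) f (map (\<lambda>a. h a k) xs)"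
      using k by (simp add: prod_alg_def o_def)
  qed
  have ext: "\<forall>a\<in>acar ?F. h a \<in> extensional {1..m}"
    using hP by (simp add: PiE_def)
  have ne: "{1..m} \<noteq> {}" using m1 by simp
  show "\<exists>m::nat \<ge> 1. \<exists>\<theta>s. (\<forall>k\<in>{1..m}. congruence ar ?F (\<theta>s k) \<and> exact_cong ar E (\<theta>s k))
       \<and> \<theta> = (\<Inter>k\<in>{1..m}. \<theta>s k)"
  proof (intro exI conjI ballI)
    show "m \<ge> 1" by (rule m1)
    fix k assume k: "k \<in> {1..m}"
    show "congruence ar ?F (ker ?F (\<lambda>a. h a k))" using ker_cong[OF hk[OF k] FA] .
    have iso1: "isomorphic ar (quotient_alg ?F (ker ?F (\<lambda>a. h a k))) (Ek k)"
      using ker_iso[OF hk[OF k] FA] sur k by blast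
    have "exact ar E (Ek k)" using Ekp k by blast
    then obtain n G where nG: "finite G" "G \<subseteq> acar (free_alg ar E {..<n})"
      "isomorphic ar (Ek k) (sub_alg (free_alg ar E {..<n}) (gen ar (free_alg ar E {..<n}) G))"
      unfolding exact_def by blast
    have "isomorphic ar (quotient_alg ?F (ker ?F (\<lambda>a. h a k)))
         (sub_alg (free_alg ar E {..<n}) (gen ar (free_alg ar E {..<n}) G))"
      by (rule iso_trans[OF iso1 nG(3)])
    thus "exact_cong ar E (ker ?F (\<lambda>a. h a k))"
      unfolding exact_cong_def exact_def using nG(1,2) by blast
  next
    show "\<theta> = (\<Inter>k\<in>{1..m}. ker ?F (\<lambda>a. h a k))"
      using th ker_prod[OF ne ext] by simp
  qed
next
  let ?F = "free1 ar E"
  have FA: "algebra ar ?F" using free1_algebra[OF assms(1)] .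
  assume "\<exists>m::nat \<ge> 1. \<exists>\<theta>s. (\<forall>k\<in>{1..m}. congruence ar ?F (\<theta>s k) \<and> exact_cong ar E (\<theta>s k))
       \<and> \<theta> = (\<Inter>k\<in>{1..m}. \<theta>s k)"
  then obtain m :: nat and \<theta>s where m1: "m \<ge> 1"
    and cs: "\<forall>k\<in>{1..m}. congruence ar ?F (\<theta>s k) \<and> exact_cong ar E (\<theta>s k)"
    and th: "\<theta> = (\<Inter>k\<in>{1..m}. \<theta>s k)" by blast
  let ?Q = "\<lambda>k. quotient_alg ?F (\<theta>s k)"
  let ?P = "\<lambda>k n G \<Phi>. finite G \<and> G \<subseteq> acar (free_alg ar E {..<n}) \<and>
      hom ar (?Q k) (sub_alg (free_alg ar E {..<n}) (gen ar (free_alg ar E {..<n}) G)) \<Phi> \<and>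
      bij_betw \<Phi> (acar (?Q k)) (acar (sub_alg (free_alg ar E {..<n}) (gen ar (free_alg ar E {..<n}) G)))"
  have "\<forall>k\<in>{1..m}. \<exists>n G \<Phi>. ?P k n G \<Phi>"
  proof
    fix k assume k: "k \<in> {1..m}"
    hence "exact ar E (?Q k)" using cs unfolding exact_cong_def by blast
    then obtain n G where nG: "finite G" "G \<subseteq> acar (free_alg ar E {..<n})"
      "isomorphic ar (?Q k) (sub_alg (free_alg ar E {..<n}) (gen ar (free_alg ar E {..<n}) G))"
      unfolding exact_def by blast
    from nG(3) obtain \<Phi> where "hom ar (?Q k) (sub_alg (free_alg ar E {..<n}) (gen ar (free_alg ar E {..<n}) G)) \<Phi>"
      "bij_betw \<Phi> (acar (?Q k)) (acar (sub_alg (free_alg ar E {..<n}) (gen ar (free_alg ar E {..<n}) G)))"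
      unfolding isomorphic_def by blast
    with nG(1,2) show "\<exists>n G \<Phi>. ?P k n G \<Phi>" by blast
  qed
  from bchoice[OF this] obtain N where "\<forall>k\<in>{1..m}. \<exists>G \<Phi>. ?P k (N k) G \<Phi>" by (elim exE)
  from bchoice[OF this] obtain GG where "\<forall>k\<in>{1..m}. \<exists>\<Phi>. ?P k (N k) (GG k) \<Phi>" by (elim exE)
  from bchoice[OF this] obtain \<Phi> where P: "\<forall>k\<in>{1..m}. ?P k (N k) (GG k) (\<Phi> k)" by (elim exE)
  define Ek where "Ek k = sub_alg (free_alg ar E {..<N k}) (gen ar (free_alg ar E {..<N k}) (GG k))" for k
  define \<psi> where "\<psi> k a = \<Phi> k (\<theta>s k `` {a})" for k a
  define h where "h a = restrict (\<lambda>k. \<psi> k a) {1..m}" for a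
  have hpsi: "hom ar ?F (Ek k) (\<psi> k)" if k: "k \<in> {1..m}" for k
  proof -
    have "hom ar ?F (?Q k) (\<lambda>a. \<theta>s k `` {a})" using proj_hom cs k FA by blast
    moreover have "hom ar (?Q k) (Ek k) (\<Phi> k)" using P k unfolding Ek_def by blast
    ultimately have "hom ar ?F (Ek k) (\<Phi> k \<circ> (\<lambda>a. \<theta>s k `` {a}))" by (rule hom_comp)
    thus ?thesis unfolding \<psi>_def o_def by simp
  qed
  have surpsi: "\<psi> k ` acar ?F = acar (Ek k)" if k: "k \<in> {1..m}" for k
  proof -
    have "\<psi> k ` acar ?F = \<Phi> k ` ((\<lambda>a. \<theta>s k `` {a}) ` acar ?F)" unfolding \<psi>_def by auto
    also have "(\<lambda>a. \<theta>s k `` {a}) ` acar ?F = acar (?Q k)"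
      by (auto simp: quotient_alg_def quotient_def)
    also have "\<Phi> k ` acar (?Q k) = acar (Ek k)"
      using P k unfolding Ek_def by (auto simp: bij_betw_def)
    finally show ?thesis .
  qed
  have kerpsi: "ker ?F (\<psi> k) = \<theta>s k" if k: "k \<in> {1..m}" for k
  proof -
    have eq: "equiv (acar ?F) (\<theta>s k)" using cs k cong_equiv by blast
    have inj: "inj_on (\<Phi> k) (acar (?Q k))" using P k by (auto simp: bij_betw_def)
    have cQ: "acar (?Q k) = acar ?F // \<theta>s k" by (simp add: quotient_alg_def)
    show ?thesis
    proof (rule set_eqI, rule iffI)
      fix p assume "p \<in> ker ?F (\<psi> k)"
      then obtain a b where p: "p = (a, b)" "a \<in> acar ?F" "b \<in> acar ?F" "\<psi> k a = \<psi> k b"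
        unfolding ker_def by auto
      have "\<theta>s k `` {a} \<in> acar (?Q k)" "\<theta>s k `` {b} \<in> acar (?Q k)"
        using p cQ by (auto intro: quotientI)
      hence "\<theta>s k `` {a} = \<theta>s k `` {b}" using inj p(4) unfolding \<psi>_def inj_on_def by blast
      thus "p \<in> \<theta>s k" using eq_equiv_class_iff[OF eq p(2,3)] p(1) by simp
    next
      fix p assume pin: "p \<in> \<theta>s k"
      then obtain a b where p: "p = (a, b)" by (cases p)
      have ab: "a \<in> acar ?F" "b \<in> acar ?F" using eq pin p unfolding equiv_def by auto
      have "\<theta>s k `` {a} = \<theta>s k `` {b}" using eq_equiv_class_iff[OF eq ab] pin p by simp
      thus "p \<in> ker ?F (\<psi> k)" using ab p unfolding ker_def \<psi>_def by simp
    qed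
  qed
  obtain v where v: "v \<in> acar ?F" "acar ?F \<subseteq> gen ar ?F {v}" using free1_gen[OF assms(1)] by blast
  have egp: "e_gen_problem ar E m Ek h"
    unfolding e_gen_problem_def
  proof (intro conjI ballI)
    show "m \<ge> 1" by (rule m1)
    fix k assume k: "k \<in> {1..m}"
    show alg: "algebra ar (Ek k)" unfolding Ek_def by (rule algebra_sub_gen)
    show "exact ar E (Ek k)" unfolding exact_def
    proof (intro exI conjI)
      show "finite (GG k)" "GG k \<subseteq> acar (free_alg ar E {..<N k})" using P k by auto
      show "isomorphic ar (Ek k) (sub_alg (free_alg ar E {..<N k}) (gen ar (free_alg ar E {..<N k}) (GG k)))"
        unfolding isomorphic_def Ek_def using hom_id bij_betw_id by blast
    qed
    show "one_generated ar (Ek k)" unfolding one_generated_def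
    proof
      show "\<psi> k v \<in> acar (Ek k)" using hpsi[OF k] v unfolding hom_def by blast
      have "\<psi> k ` gen ar ?F {v} \<subseteq> gen ar (Ek k) {\<psi> k v}"
        using gen_hom[OF hpsi[OF k] FA, of "{v}"] v by simp
      hence "acar (Ek k) \<subseteq> gen ar (Ek k) {\<psi> k v}" using surpsi[OF k] v by blast
      moreover have "gen ar (Ek k) {\<psi> k v} \<subseteq> acar (Ek k)"
        using gen_sub[OF alg] \<open>\<psi> k v \<in> acar (Ek k)\<close> by blast
      ultimately show "gen ar (Ek k) {\<psi> k v} = acar (Ek k)" by blast
    qed
  next
    show "hom ar ?F (prod_alg {1..m} Ek) h"
      unfolding hom_def
    proof (intro conjI ballI allI impI)
      fix x assume "x \<in> acar ?F"
      hence "\<forall>k\<in>{1..m}. \<psi> k x \<in> acar (Ek k)" using hpsi unfolding hom_def by blast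
      thus "h x \<in> acar (prod_alg {1..m} Ek)"
        unfolding h_def prod_alg_def by simp
    next
      fix f xs assume a: "length xs = ar f \<and> set xs \<subseteq> acar ?F"
      have "aop (prod_alg {1..m} Ek) f (map h xs) =
          restrict (\<lambda>k. aop (Ek k) f (map (\<lambda>x. x k) (map h xs))) {1..m}"
        by (simp only: prod_alg_def alg.simps)
      also have "\<dots> = restrict (\<lambda>k. \<psi> k (aop ?F f xs)) {1..m}"
      proof (rule restrict_ext)
        fix k assume k: "k \<in> {1..m}"
        have 1: "map (\<lambda>x. x k) (map h xs) = map (\<psi> k) xs" using k unfolding h_def by simp
        have 2: "\<psi> k (aop ?F f xs) = aop (Ek k) f (map (\<psi> k) xs)"
          using hpsi[OF k] a unfolding hom_def by blast
        show "aop (Ek k) f (map (\<lambda>x. x k) (map h xs)) = \<psi> k (aop ?F f xs)"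
          unfolding 1 using 2 by (rule sym)
      qed
      also have "\<dots> = h (aop ?F f xs)" unfolding h_def ..
      finally show "h (aop ?F f xs) = aop (prod_alg {1..m} Ek) f (map h xs)" by simp
    qed
  next
    fix k assume k: "k \<in> {1..m}"
    have "(\<lambda>a. h a k) ` acar ?F = \<psi> k ` acar ?F" using k unfolding h_def by simp
    thus "(\<lambda>a. h a k) ` acar ?F = acar (Ek k)" using surpsi[OF k] by simp
  qed
  have ext: "\<forall>a\<in>acar ?F. h a \<in> extensional {1..m}" unfolding h_def by simp
  have ne: "{1..m} \<noteq> {}" using m1 by simp
  have "ker ?F h = (\<Inter>k\<in>{1..m}. ker ?F (\<lambda>a. h a k))"
    by (rule ker_prod[OF ne ext])
  also have "\<dots> = (\<Inter>k\<in>{1..m}. \<theta>s k)"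
  proof (rule INF_cong[OF refl])
    fix k assume k: "k \<in> {1..m}"
    have "ker ?F (\<lambda>a. h a k) = ker ?F (\<psi> k)" using k unfolding h_def ker_def by simp
    thus "ker ?F (\<lambda>a. h a k) = \<theta>s k" using kerpsi[OF k] by simp
  qed
  finally have "\<theta> = ker ?F h" using th by simp
  thus "E_congruence ar E \<theta>" unfolding E_congruence_def using egp by blast
qed

end
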